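(* Let $n$ be a positive integer such that every component of $2n+1$ is greater than $54$. Then there exists an $(80n+40,[2^n,6^n,18^n,54^n,40],40)$ partitioned difference family in $\mathbb{Z}_{40}\times\mathbb{F}_{2n+1}$.
   Context: The components of an integer $m$ are its maximal prime power factors, and $\mathbb{F}_m$ denotes the ring which is the direct product of the finite fields whose orders are the components of $m$; $\mathbb{Z}_{40}\times\mathbb{F}_{2n+1}$ is taken as an additive group. For $B$ a subset of a finite additive group $\Gamma$, $\Delta B$ is the multiset $\{x-y:x,y\in B,x\ne y\}$; for $\mathcal{F}=\{B_1,\dots,B_t\}$, $\Delta\mathcal{F}$ is the multiset union of the $\Delta B_i$. A $(v,[k_1,\dots,k_t],\lambda)$ partitioned difference family in $\Gamma$ ($|\Gamma|=v$) is a partition of $\Gamma$ into blocks $B_i$ with $|B_i|=k_i$ such that $\Delta\mathcal{F}$ contains every non-zero element exactly $\lambda$ times. Exponents denote multiplicities of block sizes. *)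

theory Defs
  imports "HOL-Algebra.Ring" "HOL-Algebra.Ring_Divisibility" "HOL-Library.Multiset" "HOL-Library.FuncSet"
    "HOL-Computational_Algebra.Primes"
begin

definition diff_multiset :: "('g \<Rightarrow> 'g \<Rightarrow> 'g) \<Rightarrow> 'g set \<Rightarrow> 'g multiset" where
  "diff_multiset sub B =
     image_mset (\<lambda>(x, y). sub x y) (mset_set {(x, y). x \<in> B \<and> y \<in> B \<and> x \<noteq> y})"

definition is_PDF ::
  "'g set \<Rightarrow> ('g \<Rightarrow> 'g \<Rightarrow> 'g) \<Rightarrow> 'g \<Rightarrow> nat \<Rightarrow> nat multiset \<Rightarrow> nat \<Rightarrow> 'g set list \<Rightarrow> bool" where
  "is_PDF \<Gamma> sub z0 v ks lam Bs \<longleftrightarrow>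
     card \<Gamma> = v \<and>
     (\<forall>B \<in> set Bs. B \<noteq> {} \<and> B \<subseteq> \<Gamma>) \<and>
     (\<forall>i < length Bs. \<forall>j < length Bs. i \<noteq> j \<longrightarrow> Bs ! i \<inter> Bs ! j = {}) \<and>
     \<Union> (set Bs) = \<Gamma> \<and>
     mset (map card Bs) = ks \<and>
     (\<forall>g \<in> \<Gamma> - {z0}. count (sum_list (map (diff_multiset sub) Bs)) g = lam)"

text \<open>The additive group \<open>\<int>\<^sub>40 \<times> \<bbbF>\<^sub>m\<close>, where \<open>K p\<close> is the finite field whose
  order is the \<open>p\<close>-component of \<open>m\<close> (for \<open>p\<close> a prime factor of \<open>m\<close>).\<close>

definition ZF_carrier :: "nat \<Rightarrow> (nat \<Rightarrow> 'a ring) \<Rightarrow> (int \<times> (nat \<Rightarrow> 'a)) set" where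
  "ZF_carrier m K = {0..<40} \<times> (PiE (prime_factors m) (\<lambda>p. carrier (K p)))"

definition ZF_minus :: "nat \<Rightarrow> (nat \<Rightarrow> 'a ring) \<Rightarrow> int \<times> (nat \<Rightarrow> 'a) \<Rightarrow> int \<times> (nat \<Rightarrow> 'a) \<Rightarrow> int \<times> (nat \<Rightarrow> 'a)" where
  "ZF_minus m K u v = ((fst u - fst v) mod 40,
      restrict (\<lambda>p. a_minus (K p) (snd u p) (snd v p)) (prime_factors m))"

definition ZF_zero :: "nat \<Rightarrow> (nat \<Rightarrow> 'a ring) \<Rightarrow> int \<times> (nat \<Rightarrow> 'a)" where
  "ZF_zero m K = (0, restrict (\<lambda>p. zero (K p)) (prime_factors m))"

end

theory Submission
  imports Defs
begin



context field begin

lemma fld_diff: assumes "s \<in> carrier R" "x \<in> carrier R" "y \<in> carrier R"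
  shows "(s \<otimes> x) \<ominus> (s \<otimes> y) = s \<otimes> (x \<ominus> y)"
  using assms by algebra

lemma fld_negmul: assumes "s \<in> carrier R" "x \<in> carrier R"
  shows "s \<otimes> (\<ominus> x) = \<ominus> (s \<otimes> x)"
  using assms by algebra

lemma fld_solve: assumes "s \<in> carrier R" "d \<in> carrier R" "t \<in> carrier R" "d \<noteq> \<zero>"
  shows "(s \<otimes> d = t) \<longleftrightarrow> s = t \<otimes> inv d"
proof -
  have du: "d \<in> Units R" using assms field_Units by blast
  have iv: "inv d \<in> carrier R" using du by simp
  show ?thesis
  proof
    assume "s \<otimes> d = t"
    then have "t \<otimes> inv d = s \<otimes> (d \<otimes> inv d)" using assms iv m_assoc by auto
    then show "s = t \<otimes> inv d" using du assms by simp
  next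
    assume "s = t \<otimes> inv d"
    then show "s \<otimes> d = t" using du assms iv m_assoc by (simp add: m_assoc)
  qed
qed

lemma fld_minus_eq0: assumes "x \<in> carrier R" "y \<in> carrier R"
  shows "(x \<ominus> y = \<zero>) \<longleftrightarrow> x = y"
  using assms by (metis a_minus_def minus_equality r_neg add.inv_closed minus_minus)

lemma fld_mul_eq0: assumes "x \<in> carrier R" "y \<in> carrier R"
  shows "(x \<otimes> y = \<zero>) \<longleftrightarrow> x = \<zero> \<or> y = \<zero>"
  using assms integral_iff by simp

lemma fld_two: assumes "finite (carrier R)" "odd (card (carrier R))"
  shows "\<one> \<oplus> \<one> \<noteq> \<zero>"
proof
  assume h: "\<one> \<oplus> \<one> = \<zero>"
  have n1: "\<ominus> \<one> = \<one>" using h by (metis minus_equality one_closed)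
  have "additive_subgroup {\<zero>, \<one>} R"
  proof (rule additive_subgroup.intro, rule subgroup.intro)
    show "{\<zero>, \<one>} \<subseteq> carrier (add_monoid R)" by simp
    show "\<And>x y. x \<in> {\<zero>, \<one>} \<Longrightarrow> y \<in> {\<zero>, \<one>} \<Longrightarrow> x \<otimes>\<^bsub>add_monoid R\<^esub> y \<in> {\<zero>, \<one>}"
      using h by auto
    show "\<one>\<^bsub>add_monoid R\<^esub> \<in> {\<zero>, \<one>}" by simp
    show "\<And>x. x \<in> {\<zero>, \<one>} \<Longrightarrow> inv\<^bsub>add_monoid R\<^esub> x \<in> {\<zero>, \<one>}"
      using n1 by (auto simp: a_inv_def[symmetric])
  qed
  then have "card (a_rcosets {\<zero>, \<one>}) * card {\<zero>, \<one>} = order R"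
    using a_lagrange assms(1) by blast
  moreover have "card {\<zero>, \<one>} = 2" by simp
  ultimately have "even (order R)" by (metis dvd_triv_right)
  then show False using assms(2) by (simp add: order_def)
qed

lemma fld_neg_ne: assumes "finite (carrier R)" "odd (card (carrier R))" "x \<in> carrier R" "x \<noteq> \<zero>"
  shows "\<ominus> x \<noteq> x"
proof
  assume "\<ominus> x = x"
  then have "x \<otimes> (\<one> \<oplus> \<one>) = \<zero>" using assms(3)
    by (metis l_neg one_closed r_distr r_one)
  then show False using fld_two[OF assms(1,2)] assms(3,4) fld_mul_eq0 by simp
qed

end



lemma half_set:
  assumes inv: "\<And>x. x \<in> X \<Longrightarrow> f x \<in> X \<and> f (f x) = x \<and> f x \<noteq> x"
  defines "H \<equiv> {x\<in>X. x = (SOME a. a \<in> {x, f x})}"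
  shows "H \<subseteq> X" "\<And>x. x \<in> X \<Longrightarrow> (f x \<in> H \<longleftrightarrow> x \<notin> H)"
    "finite X \<Longrightarrow> card X = 2 * card H"
proof -
  show "H \<subseteq> X" unfolding H_def by auto
  have key: "f x \<in> H \<longleftrightarrow> x \<notin> H" if x: "x \<in> X" for x
  proof -
    define a where "a = (SOME a. a \<in> {x, f x})"
    have a: "a \<in> {x, f x}" unfolding a_def by (rule someI[of _ x]) simp
    have e: "{f x, f (f x)} = {x, f x}" using inv[OF x] by auto
    have sa: "(SOME a. a \<in> {f x, f (f x)}) = a" unfolding a_def by (simp only: e)
    have "f x \<in> H \<longleftrightarrow> f x = a" unfolding H_def using inv[OF x] sa by auto
    moreover have "x \<in> H \<longleftrightarrow> x = a" unfolding H_def a_def using x by auto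
    ultimately show ?thesis using a inv[OF x] by auto
  qed
  then show "\<And>x. x \<in> X \<Longrightarrow> (f x \<in> H \<longleftrightarrow> x \<notin> H)" by blast
  assume fin: "finite X"
  have HX: "H \<subseteq> X" unfolding H_def by auto
  have XU: "X = H \<union> f ` H"
  proof
    show "X \<subseteq> H \<union> f ` H"
    proof
      fix x assume x: "x \<in> X"
      show "x \<in> H \<union> f ` H"
      proof (cases "x \<in> H")
        case False
        then have "f x \<in> H" using key x by blast
        then show ?thesis using inv[OF x] by (metis UnI2 image_eqI)
      qed simp
    qed
    show "H \<union> f ` H \<subseteq> X" using HX inv by auto
  qed
  have disj: "H \<inter> f ` H = {}"
  proof (rule ccontr)
    assume "H \<inter> f ` H \<noteq> {}"
    then obtain y where y: "y \<in> H" "f y \<in> H" by auto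
    then show False using key HX by blast
  qed
  have inj: "inj_on f H" using inv HX by (metis inj_on_inverseI subsetD)
  have fH: "finite H" using fin HX finite_subset by blast
  have "card X = card H + card (f ` H)" using XU disj fH by (simp add: card_Un_disjoint)
  also have "\<dots> = 2 * card H" using card_image[OF inj] by simp
  finally show "card X = 2 * card H" .
qed

lemma count_sum_list: "count (sum_list Ms) x = sum_list (map (\<lambda>M. count M x) Ms)"
  by (induction Ms) auto

lemma count_diff_multiset:
  assumes "finite B"
  shows "count (diff_multiset sub B) t = card {(x,y). x\<in>B \<and> y\<in>B \<and> x\<noteq>y \<and> sub x y = t}"
proof -
  let ?P = "{(x, y). x \<in> B \<and> y \<in> B \<and> x \<noteq> y}"
  have fP: "finite ?P" by (rule finite_subset[of _ "B \<times> B"]) (use assms in auto)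
  have "count (diff_multiset sub B) t = (\<Sum>y\<in>(\<lambda>(x, y). sub x y) -` {t} \<inter> ?P. 1)"
    unfolding diff_multiset_def count_image_mset using fP by (intro sum.cong) auto
  also have "\<dots> = card ((\<lambda>(x, y). sub x y) -` {t} \<inter> ?P)" by simp
  also have "(\<lambda>(x, y). sub x y) -` {t} \<inter> ?P = {(x,y). x\<in>B \<and> y\<in>B \<and> x\<noteq>y \<and> sub x y = t}" by auto
  finally show ?thesis .
qed

definition BL :: "nat list" where
  "BL = [2,2,2,3,3,3,3,3,0,3,3,3,3,3,3,3,2,3,1,3,3,3,3,2,3,2,3,3,1,2,3,3,3,3,2,3,3,2,1,3]"

definition Aset :: "nat \<Rightarrow> int set" where
  "Aset i = {g. 0 \<le> g \<and> g < 40 \<and> BL ! nat g = i}"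

definition iota :: "int \<Rightarrow> nat" where
  "iota g = length (filter (\<lambda>x. x = BL ! nat g) (take (nat g) BL))"

lemma BL_len: "length BL = 40" by (simp add: BL_def)

lemma BL_rot: "list_all (\<lambda>c. length (filter (\<lambda>(x,y). x=y) (zip BL (rotate (40-c) BL))) = 20) [1..<40]"
  by (simp add: BL_def rotate_drop_take upt_rec)

lemma BL_vals: "set BL \<subseteq> {0,1,2,3}" by (simp add: BL_def)

lemma BL_counts: "length (filter (\<lambda>x. x = 0) BL) = 1" "length (filter (\<lambda>x. x = 1) BL) = 3"
  "length (filter (\<lambda>x. x = 2) BL) = 9" "length (filter (\<lambda>x. x = 3) BL) = 27"
  by (simp_all add: BL_def)




lemma Aset_cover: "0 \<le> g \<Longrightarrow> g < 40 \<Longrightarrow> BL ! nat g < 4 \<and> g \<in> Aset (BL ! nat g)"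
proof -
  assume "0 \<le> g" "g < 40"
  then have "BL ! nat g \<in> set BL" using BL_len by simp
  then show ?thesis using BL_vals \<open>0 \<le> g\<close> \<open>g < 40\<close> by (auto simp: Aset_def)
qed

lemma Aset_sub: "Aset i \<subseteq> {0..<40}" by (auto simp: Aset_def)

lemma card_Aset: "card (Aset i) = length (filter (\<lambda>x. x = i) BL)"
proof -
  have "Aset i = int ` {k. k < length BL \<and> BL ! k = i}"
  proof
    show "Aset i \<subseteq> int ` {k. k < length BL \<and> BL ! k = i}"
    proof
      fix g assume "g \<in> Aset i"
      then have "g = int (nat g)" "nat g < length BL \<and> BL ! nat g = i" by (auto simp: Aset_def BL_len)
      then show "g \<in> int ` {k. k < length BL \<and> BL ! k = i}" by blast
    qed
    show "int ` {k. k < length BL \<and> BL ! k = i} \<subseteq> Aset i" by (auto simp: Aset_def BL_len)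
  qed
  then have "card (Aset i) = card {k. k < length BL \<and> BL ! k = i}" by (simp add: card_image)
  then show ?thesis by (simp add: length_filter_conv_card)
qed

lemma card_Aset_vals: "card (Aset 0) = 1" "card (Aset 1) = 3" "card (Aset 2) = 9" "card (Aset 3) = 27"
  using BL_counts by (simp_all add: card_Aset)

lemma finite_Aset: "finite (Aset i)" using Aset_sub finite_subset by blast

lemma filter_take_mono:
  assumes "g < h" "h \<le> length xs"
  shows "length (filter P (take h xs)) \<ge> length (filter P (take g xs)) + (if P (xs ! g) then 1 else 0)"
proof -
  have "take h xs = take (Suc g) xs @ take (h - Suc g) (drop (Suc g) xs)"
    using assms by (metis add_diff_inverse_nat not_less_eq take_add)
  moreover have "take (Suc g) xs = take g xs @ [xs ! g]" using assms by (simp add: take_Suc_conv_app_nth)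
  ultimately show ?thesis by simp
qed

lemma iota_lt: assumes "g \<in> Aset i" "h \<in> Aset i" "g < h" shows "iota g < iota h"
proof -
  have "nat g < nat h" "nat h \<le> length BL" "BL ! nat g = i" "BL ! nat h = i"
    using assms by (auto simp: Aset_def BL_len)
  then show ?thesis unfolding iota_def using filter_take_mono[of "nat g" "nat h" BL "\<lambda>x. x = i"] by simp
qed

lemma iota_inj: "inj_on iota (Aset i)"
proof (rule inj_onI)
  fix g h assume "g \<in> Aset i" "h \<in> Aset i" "iota g = iota h"
  then show "g = h" using iota_lt by (metis less_irrefl linorder_neqE)
qed

lemma iota_bound: assumes "g \<in> Aset i" shows "iota g < 27"
proof -
  have g: "nat g < 40" "BL ! nat g = i" "i < 4" using assms Aset_cover by (auto simp: Aset_def)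
  have "iota g < length (filter (\<lambda>x. x = i) BL)"
    using filter_take_mono[of "nat g" 40 BL "\<lambda>x. x = i"] g BL_len by (simp add: iota_def)
  moreover have "length (filter (\<lambda>x. x = i) BL) \<le> 27"
  proof -
    have "i = 0 \<or> i = 1 \<or> i = 2 \<or> i = 3" using g(3) by auto
    then show ?thesis using BL_counts by auto
  qed
  ultimately show ?thesis by simp
qed

lemma rot_count:
  assumes "1 \<le> c" "c < (40::int)"
  shows "card {g. 0 \<le> g \<and> g < 40 \<and> BL ! nat g = BL ! nat ((g - c) mod 40)} = 20"
proof -
  define c' where "c' = nat c"
  have c': "c' \<in> set [1..<40]" using assms unfolding c'_def by auto
  have L: "length (filter (\<lambda>(x,y). x=y) (zip BL (rotate (40-c') BL))) = 20"
    using BL_rot c' by (simp add: list_all_iff)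
  have "length (filter (\<lambda>(x,y). x=y) (zip BL (rotate (40-c') BL)))
      = card {k. k < 40 \<and> BL ! k = BL ! ((k + (40 - c')) mod 40)}"
    unfolding length_filter_conv_card
    by (rule arg_cong[where f=card]) (auto simp: nth_rotate BL_len add.commute)
  also have "{k. k < 40 \<and> BL ! k = BL ! ((k + (40 - c')) mod 40)}
      = nat ` {g. 0 \<le> g \<and> g < 40 \<and> BL ! nat g = BL ! nat ((g - c) mod 40)}"
  proof -
    have e: "nat ((int k - c) mod 40) = (k + (40 - c')) mod 40" if "k < 40" for k
    proof -
      have "int k + (40 - c) = (int k - c) + 40" by simp
      then have "(int k - c) mod 40 = (int k + (40 - c)) mod 40" by (metis mod_add_self2)
      also have "\<dots> = int ((k + (40 - c')) mod 40)" using assms by (simp add: c'_def zmod_int of_nat_diff add_diff_eq)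
      finally show ?thesis by simp
    qed
    have s1: "k \<in> nat ` {g. 0 \<le> g \<and> g < 40 \<and> BL ! nat g = BL ! nat ((g - c) mod 40)}"
      if "k < 40" "BL ! k = BL ! ((k + (40 - c')) mod 40)" for k
      using e[of k] that by (intro image_eqI[of _ _ "int k"]) auto
    have s2: "k < 40 \<and> BL ! k = BL ! ((k + (40 - c')) mod 40)"
      if hk: "k \<in> nat ` {g. 0 \<le> g \<and> g < 40 \<and> BL ! nat g = BL ! nat ((g - c) mod 40)}" for k
    proof -
      obtain g where "k = nat g" "0 \<le> g" "g < 40" "BL ! nat g = BL ! nat ((g - c) mod 40)" using hk by auto
      then show ?thesis using e[of k] by auto
    qed
    show ?thesis using s1 s2 by blast
  qed
  also have "card \<dots> = card {g. 0 \<le> g \<and> g < 40 \<and> BL ! nat g = BL ! nat ((g - c) mod 40)}"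
    by (rule card_image) (auto simp: inj_on_def)
  finally show ?thesis using L by simp
qed




definition Qset :: "int \<Rightarrow> ((int \<times> bool) \<times> (int \<times> bool)) set" where
  "Qset c = {(u,v). fst u \<in> {0..<40} \<and> fst v \<in> {0..<40} \<and> BL ! nat (fst u) = BL ! nat (fst v)
       \<and> u \<noteq> v \<and> (fst u - fst v) mod 40 = c}"

lemma Qset_card: assumes "0 \<le> c" "c < 40" shows "card (Qset c) = 80"
proof -
  define M where "M = {g. 0 \<le> g \<and> g < 40 \<and> BL ! nat g = BL ! nat ((g - c) mod 40)}"
  define W where "W = M \<times> {(b::bool,b'::bool). c = 0 \<longrightarrow> b \<noteq> b'}"
  define F where "F = (\<lambda>(g::int,(b::bool,b'::bool)). ((g,b),((g - c) mod 40, b')))"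
  have inj: "inj_on F W" unfolding F_def inj_on_def by auto
  have img: "Qset c = F ` W"
  proof
    show "F ` W \<subseteq> Qset c"
    proof
      fix z assume "z \<in> F ` W"
      then obtain g b b' where z: "z = ((g,b),((g - c) mod 40, b'))" "g \<in> M" "c = 0 \<longrightarrow> b \<noteq> b'"
        unfolding F_def W_def by auto
      have "(g - (g - c) mod 40) mod 40 = (g - (g - c)) mod 40" by (rule mod_diff_right_eq)
      then have "(g - (g - c) mod 40) mod 40 = c" using assms by simp
      moreover have "(g,b) \<noteq> ((g - c) mod 40, b')"
      proof
        assume h: "(g,b) = ((g - c) mod 40, b')"
        then have "c = 0" using \<open>(g - (g - c) mod 40) mod 40 = c\<close> by simp
        then show False using h z by auto
      qed
      ultimately show "z \<in> Qset c" using z unfolding Qset_def M_def by auto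
    qed
    show "Qset c \<subseteq> F ` W"
    proof
      fix z assume z: "z \<in> Qset c"
      then obtain g b h b' where zz: "z = ((g,b),(h,b'))" by (metis prod.collapse)
      have hg: "g \<in> {0..<40}" "h \<in> {0..<40}" "BL ! nat g = BL ! nat h" "(g,b) \<noteq> (h,b')"
        "(g - h) mod 40 = c" using z zz unfolding Qset_def by auto
      have hh: "h = (g - c) mod 40"
      proof -
        have "(g - c) mod 40 = (g - (g - h) mod 40) mod 40" using hg(5) by simp
        also have "\<dots> = (g - (g - h)) mod 40" by (simp add: mod_diff_right_eq)
        also have "\<dots> = h" using hg(2) by simp
        finally show ?thesis by simp
      qed
      have "c = 0 \<longrightarrow> b \<noteq> b'"
      proof
        assume "c = 0"
        then have "h = g" using hh hg(1) by simp
        then show "b \<noteq> b'" using hg(4) by simp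
      qed
      then have "(g,(b,b')) \<in> W" using hg hh unfolding W_def M_def by auto
      moreover have "z = F (g,(b,b'))" using zz hh unfolding F_def by simp
      ultimately show "z \<in> F ` W" by blast
    qed
  qed
  have "card (Qset c) = card W" using img inj by (simp add: card_image)
  also have "\<dots> = card M * card {(b::bool,b'::bool). c = 0 \<longrightarrow> b \<noteq> b'}"
    unfolding W_def by (rule card_cartesian_product)
  also have "\<dots> = 80"
  proof (cases "c = 0")
    case True
    have "M = {0..<40}" unfolding M_def using True by auto
    moreover have "{(b::bool,b'::bool). c = 0 \<longrightarrow> b \<noteq> b'} = {(True,False),(False,True)}"
      using True by auto
    ultimately show ?thesis by simp
  next
    case False
    have "card M = 20" unfolding M_def using rot_count[of c] False assms by simp
    moreover have "{(b::bool,b'::bool). c = 0 \<longrightarrow> b \<noteq> b'} = UNIV" using False by auto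
    moreover have "card (UNIV :: (bool \<times> bool) set) = 4" by (simp add: UNIV_Times_UNIV[symmetric] card_cartesian_product del: UNIV_Times_UNIV)
    ultimately show ?thesis by simp
  qed
  finally show ?thesis .
qed

lemma pair_count: assumes "0 \<le> c" "c < 40"
  shows "(\<Sum>i\<in>{0..<4::nat}. card {(u,v). u \<in> Aset i \<times> (UNIV::bool set) \<and> v \<in> Aset i \<times> UNIV \<and> u \<noteq> v \<and> (fst u - fst v) mod 40 = c}) = 80"
proof -
  let ?Q = "\<lambda>i. {(u,v). u \<in> Aset i \<times> (UNIV::bool set) \<and> v \<in> Aset i \<times> UNIV \<and> u \<noteq> v \<and> (fst u - fst v) mod 40 = c}"
  have fin: "finite (?Q i)" for i
    by (rule finite_subset[of _ "(Aset i \<times> UNIV) \<times> (Aset i \<times> UNIV)"]) (auto simp: finite_Aset)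
  have "(\<Sum>i\<in>{0..<4::nat}. card (?Q i)) = card (\<Union>i\<in>{0..<4}. ?Q i)"
    by (rule card_UN_disjoint[symmetric]) (use fin in \<open>auto simp: Aset_def\<close>)
  also have "(\<Union>i\<in>{0..<4}. ?Q i) = Qset c"
  proof
    show "(\<Union>i\<in>{0..<4}. ?Q i) \<subseteq> Qset c" unfolding Qset_def Aset_def by auto
    show "Qset c \<subseteq> (\<Union>i\<in>{0..<4}. ?Q i)"
    proof
      fix z assume z: "z \<in> Qset c"
      then obtain g b h b' where zz: "z = ((g,b),(h,b'))" by (metis prod.collapse)
      have hg: "0 \<le> g" "g < 40" "0 \<le> h" "h < 40" "BL ! nat g = BL ! nat h" "(g,b) \<noteq> (h,b')"
        "(g - h) mod 40 = c" using z zz unfolding Qset_def by auto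
      have "BL ! nat g < 4" using Aset_cover hg by auto
      moreover have "g \<in> Aset (BL ! nat g)" "h \<in> Aset (BL ! nat g)" using hg unfolding Aset_def by auto
      ultimately show "z \<in> (\<Union>i\<in>{0..<4}. ?Q i)" using zz hg(6,7) by (intro UN_I[of "BL ! nat g"]) auto
    qed
  qed
  finally show ?thesis using Qset_card assms by simp
qed




lemma (in field) fld_negmul_l: assumes "s \<in> carrier R" "x \<in> carrier R"
  shows "(\<ominus> s) \<otimes> x = \<ominus> (s \<otimes> x)"
  using assms by algebra

lemma (in field) fld_negsub: assumes "x \<in> carrier R" "y \<in> carrier R"
  shows "(\<ominus> x) \<ominus> (\<ominus> y) = \<ominus> (x \<ominus> y)"
  using assms by algebra

lemma (in field) fld_negneg: assumes "x \<in> carrier R" shows "\<ominus> (\<ominus> x) = x"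
  using assms by simp

lemma (in field) fld_neg_eq0: assumes "x \<in> carrier R" shows "(\<ominus> x = \<zero>) \<longleftrightarrow> x = \<zero>"
  using assms by (metis add.inv_closed fld_negneg minus_zero)

locale pctx =
  fixes n :: nat and K :: "nat \<Rightarrow> 'a ring"
  assumes npos: "n > 0"
    and big: "\<forall>p \<in> prime_factors (2*n+1). p ^ multiplicity p (2*n+1) > 54"
    and fld: "\<forall>p \<in> prime_factors (2*n+1). field (K p) \<and> finite (carrier (K p)) \<and>
           card (carrier (K p)) = p ^ multiplicity p (2*n+1)"
begin

definition "PF = prime_factors (2*n+1)"

definition "RR = PiE PF (\<lambda>p. carrier (K p))"
definition "rz = restrict (\<lambda>p. zero (K p)) PF"
definition "rneg u = restrict (\<lambda>p. a_inv (K p) (u p)) PF"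
definition "rmul u v = restrict (\<lambda>p. mult (K p) (u p) (v p)) PF"
definition "rsub u v = restrict (\<lambda>p. a_minus (K p) (u p) (v p)) PF"
definition "rinv u = restrict (\<lambda>p. m_inv (K p) (u p)) PF"
definition "isunit u \<longleftrightarrow> u \<in> RR \<and> (\<forall>p\<in>PF. u p \<noteq> zero (K p))"

lemma Fp: "p \<in> PF \<Longrightarrow> field (K p)" using fld unfolding PF_def by blast

lemma finK: "p \<in> PF \<Longrightarrow> finite (carrier (K p))" using fld unfolding PF_def by blast

lemma oddK: assumes "p \<in> PF" shows "odd (card (carrier (K p)))"
proof -
  have "p dvd 2*n+1" using assms by (simp add: in_prime_factors_iff PF_def)
  then have "odd p" using dvd_trans[of 2 p "2*n+1"] by auto
  moreover have "card (carrier (K p)) = p ^ multiplicity p (2*n+1)" using fld assms unfolding PF_def by blast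
  ultimately show ?thesis by simp
qed

lemma bigK: assumes "p \<in> PF" shows "card (carrier (K p)) \<ge> 55"
proof -
  have "card (carrier (K p)) = p ^ multiplicity p (2*n+1)" using fld assms unfolding PF_def by blast
  moreover have "p ^ multiplicity p (2*n+1) > 54" using big assms unfolding PF_def by blast
  ultimately show ?thesis by linarith
qed

lemma RR_eqI: "u \<in> RR \<Longrightarrow> v \<in> RR \<Longrightarrow> (\<And>p. p \<in> PF \<Longrightarrow> u p = v p) \<Longrightarrow> u = v"
  unfolding RR_def by (rule PiE_ext)

lemma RR_mem: "u \<in> RR \<Longrightarrow> p \<in> PF \<Longrightarrow> u p \<in> carrier (K p)"
  unfolding RR_def by auto

lemma zeroK: "p \<in> PF \<Longrightarrow> zero (K p) \<in> carrier (K p)"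
proof - assume "p \<in> PF" then interpret field "K p" by (rule Fp) show ?thesis by simp qed
lemma negK: "p \<in> PF \<Longrightarrow> x \<in> carrier (K p) \<Longrightarrow> a_inv (K p) x \<in> carrier (K p)"
proof - assume "p \<in> PF" "x \<in> carrier (K p)" then interpret field "K p" by (intro Fp) show ?thesis using \<open>x \<in> carrier (K p)\<close> by simp qed
lemma mulK: "p \<in> PF \<Longrightarrow> x \<in> carrier (K p) \<Longrightarrow> y \<in> carrier (K p) \<Longrightarrow> mult (K p) x y \<in> carrier (K p)"
proof - assume "p \<in> PF" "x \<in> carrier (K p)" "y \<in> carrier (K p)" then interpret field "K p" by (intro Fp) show ?thesis using \<open>x \<in> carrier (K p)\<close> \<open>y \<in> carrier (K p)\<close> by simp qed
lemma subK: "p \<in> PF \<Longrightarrow> x \<in> carrier (K p) \<Longrightarrow> y \<in> carrier (K p) \<Longrightarrow> a_minus (K p) x y \<in> carrier (K p)"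
proof - assume "p \<in> PF" "x \<in> carrier (K p)" "y \<in> carrier (K p)" then interpret field "K p" by (intro Fp) show ?thesis using \<open>x \<in> carrier (K p)\<close> \<open>y \<in> carrier (K p)\<close> by simp qed

lemma rz_RR: "rz \<in> RR" unfolding rz_def RR_def using zeroK by auto

lemma rz_app: "p \<in> PF \<Longrightarrow> rz p = zero (K p)" by (simp add: rz_def)

lemma rneg_RR: assumes "u \<in> RR" shows "rneg u \<in> RR"
proof -
  have "\<forall>p\<in>PF. a_inv (K p) (u p) \<in> carrier (K p)" using negK RR_mem assms by blast
  then show ?thesis unfolding rneg_def RR_def by simp
qed

lemma rmul_RR: assumes "u \<in> RR" "v \<in> RR" shows "rmul u v \<in> RR"
proof -
  have "\<forall>p\<in>PF. mult (K p) (u p) (v p) \<in> carrier (K p)" using mulK RR_mem assms by blast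
  then show ?thesis unfolding rmul_def RR_def by simp
qed

lemma rsub_RR: assumes "u \<in> RR" "v \<in> RR" shows "rsub u v \<in> RR"
proof -
  have "\<forall>p\<in>PF. a_minus (K p) (u p) (v p) \<in> carrier (K p)" using subK RR_mem assms by blast
  then show ?thesis unfolding rsub_def RR_def by simp
qed

lemma rinv_RR: "isunit u \<Longrightarrow> rinv u \<in> RR"
proof -
  assume u: "isunit u"
  have "m_inv (K p) (u p) \<in> carrier (K p)" if p: "p \<in> PF" for p
  proof -
    interpret field "K p" using Fp p .
    have "u p \<in> Units (K p)" using u p field_Units RR_mem by (auto simp: isunit_def)
    then show ?thesis by simp
  qed
  then show ?thesis unfolding rinv_def RR_def by auto
qed

lemma rneg_rneg: assumes "u \<in> RR" shows "rneg (rneg u) = u"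
proof (rule RR_eqI)
  show "rneg (rneg u) \<in> RR" by (intro rneg_RR assms)
  fix p assume p: "p \<in> PF"
  show "rneg (rneg u) p = u p"
    using field.fld_negneg[OF Fp[OF p] RR_mem[OF assms p]] p by (simp add: rneg_def)
qed (rule assms)

lemma rneg_rz_iff: assumes "u \<in> RR" shows "rneg u = rz \<longleftrightarrow> u = rz"
proof
  assume h: "rneg u = rz"
  show "u = rz"
  proof (rule RR_eqI[OF assms rz_RR])
    fix p assume p: "p \<in> PF"
    have "rneg u p = rz p" using h by simp
    then show "u p = rz p"
      using field.fld_neg_eq0[OF Fp[OF p] RR_mem[OF assms p]] p by (simp add: rneg_def rz_def)
  qed
next
  assume "u = rz"
  then show "rneg u = rz" unfolding rneg_def rz_def
    by (intro restrict_ext) (simp add: field.fld_neg_eq0[OF Fp] zeroK)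
qed

lemma rneg_ne: assumes "u \<in> RR" "u \<noteq> rz" shows "rneg u \<noteq> u"
proof
  assume h: "rneg u = u"
  obtain p where p: "p \<in> PF" "u p \<noteq> zero (K p)"
    using assms RR_eqI[OF assms(1) rz_RR] rz_app by metis
  have "rneg u p = u p" using h by simp
  then have "a_inv (K p) (u p) = u p" using p by (simp add: rneg_def)
  then show False using field.fld_neg_ne[OF Fp[OF p(1)] finK[OF p(1)] oddK[OF p(1)] RR_mem[OF assms(1) p(1)] p(2)]
    by simp
qed

lemma rsub_rmul: assumes "s \<in> RR" "x \<in> RR" "y \<in> RR"
  shows "rsub (rmul s x) (rmul s y) = rmul s (rsub x y)"
  unfolding rsub_def rmul_def
  by (intro restrict_ext) (simp add: field.fld_diff[OF Fp] RR_mem assms)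

lemma rmul_rneg: assumes "s \<in> RR" "x \<in> RR" shows "rmul s (rneg x) = rneg (rmul s x)"
  unfolding rneg_def rmul_def
  by (intro restrict_ext) (simp add: field.fld_negmul[OF Fp] RR_mem assms)

lemma rmul_rneg_l: assumes "s \<in> RR" "x \<in> RR" shows "rmul (rneg s) x = rneg (rmul s x)"
  unfolding rneg_def rmul_def
  by (intro restrict_ext) (simp add: field.fld_negmul_l[OF Fp] RR_mem assms)

lemma rsub_rneg: assumes "x \<in> RR" "y \<in> RR" shows "rsub (rneg x) (rneg y) = rneg (rsub x y)"
  unfolding rneg_def rsub_def
  by (intro restrict_ext) (simp add: field.fld_negsub[OF Fp] RR_mem assms)

lemma rsub_rz: "rsub rz rz = rz"
  unfolding rsub_def rz_def
  by (intro restrict_ext) (simp add: field.fld_minus_eq0[OF Fp] zeroK)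

lemma rmul_rz: assumes "x \<in> RR" shows "rmul rz x = rz"
  unfolding rz_def rmul_def
  by (intro restrict_ext) (simp add: field.fld_mul_eq0[OF Fp] zeroK RR_mem assms)

lemma rmul_solve: assumes "isunit d" "s \<in> RR" "t \<in> RR"
  shows "rmul s d = t \<longleftrightarrow> s = rmul t (rinv d)"
proof -
  have d: "d \<in> RR" "\<And>p. p \<in> PF \<Longrightarrow> d p \<noteq> zero (K p)" using assms(1) by (auto simp: isunit_def)
  have c: "mult (K p) (s p) (d p) = t p \<longleftrightarrow> s p = mult (K p) (t p) (m_inv (K p) (d p))" if p: "p \<in> PF" for p
    using field.fld_solve[OF Fp[OF p] RR_mem[OF assms(2) p] RR_mem[OF d(1) p] RR_mem[OF assms(3) p] d(2)[OF p]] .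
  show ?thesis
  proof
    assume h: "rmul s d = t"
    show "s = rmul t (rinv d)"
    proof (rule RR_eqI[OF assms(2) rmul_RR[OF assms(3) rinv_RR[OF assms(1)]]])
      fix p assume p: "p \<in> PF"
      have "mult (K p) (s p) (d p) = t p" using fun_cong[OF h, of p] p by (simp add: rmul_def)
      then show "s p = rmul t (rinv d) p" using c[OF p] p by (simp add: rmul_def rinv_def)
    qed
  next
    assume h: "s = rmul t (rinv d)"
    show "rmul s d = t"
    proof (rule RR_eqI[OF rmul_RR[OF assms(2) d(1)] assms(3)])
      fix p assume p: "p \<in> PF"
      have "s p = mult (K p) (t p) (m_inv (K p) (d p))" using fun_cong[OF h, of p] p by (simp add: rmul_def rinv_def)
      then show "rmul s d p = t p" using c[OF p] p by (simp add: rmul_def)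
    qed
  qed
qed

lemma finite_PF: "finite PF" by (simp add: PF_def)

lemma card_RR: "card RR = 2*n+1"
proof -
  have "card RR = (\<Prod>p\<in>PF. card (carrier (K p)))" unfolding RR_def by (rule card_PiE[OF finite_PF])
  also have "\<dots> = (\<Prod>p\<in>PF. p ^ multiplicity p (2*n+1))"
    by (rule prod.cong[OF refl]) (use fld in \<open>unfold PF_def, blast\<close>)
  also have "\<dots> = 2*n+1" unfolding PF_def by (rule prime_factorization_nat[symmetric]) simp
  finally show ?thesis .
qed

lemma finite_RR: "finite RR" using card_RR card.infinite by fastforce

definition "SS = {x\<in>RR - {rz}. x = (SOME a. a \<in> {x, rneg x})}"

lemma SS_props: "SS \<subseteq> RR - {rz}" "\<And>x. x \<in> RR - {rz} \<Longrightarrow> (rneg x \<in> SS \<longleftrightarrow> x \<notin> SS)"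
    "card (RR - {rz}) = 2 * card SS"
proof -
  have inv: "\<And>x. x \<in> RR - {rz} \<Longrightarrow> rneg x \<in> RR - {rz} \<and> rneg (rneg x) = x \<and> rneg x \<noteq> x"
    using rneg_RR rneg_rneg rneg_rz_iff rneg_ne by auto
  show "SS \<subseteq> RR - {rz}" "\<And>x. x \<in> RR - {rz} \<Longrightarrow> (rneg x \<in> SS \<longleftrightarrow> x \<notin> SS)"
    "card (RR - {rz}) = 2 * card SS"
    unfolding SS_def using half_set[of "RR - {rz}" rneg, OF inv] finite_RR by auto
qed

lemma card_SS: "card SS = n"
proof -
  have "card (RR - {rz}) = 2*n" using card_RR rz_RR finite_RR by (simp add: card_Diff_singleton)
  then show ?thesis using SS_props(3) by simp
qed

lemma finite_SS: "finite SS" using SS_props(1) finite_RR finite_subset by blast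

definition "Sp p = {x\<in>carrier (K p) - {zero (K p)}. x = (SOME a. a \<in> {x, a_inv (K p) x})}"

lemma Sp_props: assumes p: "p \<in> PF"
  shows "Sp p \<subseteq> carrier (K p) - {zero (K p)}"
    "\<And>x. x \<in> carrier (K p) - {zero (K p)} \<Longrightarrow> (a_inv (K p) x \<in> Sp p \<longleftrightarrow> x \<notin> Sp p)"
    "card (Sp p) \<ge> 27"
proof -
  interpret field "K p" using Fp[OF p] .
  have inv: "\<And>x. x \<in> carrier (K p) - {zero (K p)} \<Longrightarrow> a_inv (K p) x \<in> carrier (K p) - {zero (K p)}
      \<and> a_inv (K p) (a_inv (K p) x) = x \<and> a_inv (K p) x \<noteq> x"
    using fld_neg_ne[OF finK[OF p] oddK[OF p]] fld_neg_eq0 by auto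
  note h = half_set[of "carrier (K p) - {zero (K p)}" "a_inv (K p)", OF inv]
  show "Sp p \<subseteq> carrier (K p) - {zero (K p)}"
    "\<And>x. x \<in> carrier (K p) - {zero (K p)} \<Longrightarrow> (a_inv (K p) x \<in> Sp p \<longleftrightarrow> x \<notin> Sp p)"
    unfolding Sp_def using h by auto
  have "card (carrier (K p) - {zero (K p)}) = 2 * card (Sp p)"
    unfolding Sp_def using h finK[OF p] by auto
  moreover have "card (carrier (K p) - {zero (K p)}) \<ge> 54"
    using bigK[OF p] finK[OF p] by (simp add: card_Diff_singleton)
  ultimately show "card (Sp p) \<ge> 27" by simp
qed

definition "ee p = (SOME f. f ` {..<27::nat} \<subseteq> Sp p \<and> inj_on f {..<27})"

lemma ee_props: assumes p: "p \<in> PF" shows "ee p ` {..<27} \<subseteq> Sp p" "inj_on (ee p) {..<27}"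
proof -
  have fS: "finite (Sp p)" using Sp_props(1)[OF p] finK[OF p] finite_subset by blast
  have "\<exists>f. f ` {..<27::nat} \<subseteq> Sp p \<and> inj_on f {..<27}"
    by (rule card_le_inj) (use fS Sp_props(3)[OF p] in auto)
  then have "ee p ` {..<27} \<subseteq> Sp p \<and> inj_on (ee p) {..<27}"
    unfolding ee_def by (rule someI_ex)
  then show "ee p ` {..<27} \<subseteq> Sp p" "inj_on (ee p) {..<27}" by auto
qed

definition "yv j = restrict (\<lambda>p. ee p j) PF"

definition "sg b w = (if b then w else rneg w)"

lemma yv_RR: "j < 27 \<Longrightarrow> yv j \<in> RR"
  using ee_props(1) Sp_props(1) unfolding yv_def RR_def by fastforce

lemma sg_RR: "w \<in> RR \<Longrightarrow> sg b w \<in> RR" by (simp add: sg_def rneg_RR)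

lemma sg_not: "w \<in> RR \<Longrightarrow> sg (\<not> b) w = rneg (sg b w)" by (simp add: sg_def rneg_rneg)

lemma D_unit: assumes "j < 27" "k < 27" "(j,b) \<noteq> (k,b')"
  shows "isunit (rsub (sg b (yv j)) (sg b' (yv k)))"
  unfolding isunit_def
proof (intro conjI ballI)
  show "rsub (sg b (yv j)) (sg b' (yv k)) \<in> RR" by (intro rsub_RR sg_RR yv_RR assms)
  fix p assume p: "p \<in> PF"
  interpret field "K p" using Fp[OF p] .
  define x where "x = ee p j"
  define y where "y = ee p k"
  have xS: "x \<in> Sp p" "y \<in> Sp p" using ee_props(1)[OF p] assms unfolding x_def y_def by auto
  have xc: "x \<in> carrier (K p) - {zero (K p)}" "y \<in> carrier (K p) - {zero (K p)}"
    using xS Sp_props(1)[OF p] by auto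
  have xy: "j \<noteq> k \<Longrightarrow> x \<noteq> y" using ee_props(2)[OF p] assms unfolding x_def y_def inj_on_def by auto
  have sp: "\<And>z. z \<in> carrier (K p) - {zero (K p)} \<Longrightarrow> (a_inv (K p) z \<in> Sp p \<longleftrightarrow> z \<notin> Sp p)"
    using Sp_props(2)[OF p] by blast
  have val: "rsub (sg b (yv j)) (sg b' (yv k)) p =
      a_minus (K p) (if b then x else a_inv (K p) x) (if b' then y else a_inv (K p) y)"
    using p by (simp add: rsub_def sg_def rneg_def yv_def x_def y_def)
  have ne: "(if b then x else a_inv (K p) x) \<noteq> (if b' then y else a_inv (K p) y)"
  proof (cases b; cases b')
    assume "b" "b'" then show ?thesis using xy assms by auto
  next
    assume "b" "\<not> b'" then show ?thesis using sp[OF xc(2)] xS by auto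
  next
    assume "\<not> b" "b'" then show ?thesis using sp[OF xc(1)] xS by auto
  next
    assume "\<not> b" "\<not> b'"
    have jk: "j \<noteq> k" using assms \<open>\<not> b\<close> \<open>\<not> b'\<close> by auto
    show ?thesis
    proof
      assume "(if b then x else a_inv (K p) x) = (if b' then y else a_inv (K p) y)"
      then have "a_inv (K p) x = a_inv (K p) y" using \<open>\<not> b\<close> \<open>\<not> b'\<close> by simp
      then have "a_inv (K p) (a_inv (K p) x) = a_inv (K p) (a_inv (K p) y)" by simp
      then have "x = y" using xc fld_negneg by simp
      then show False using xy jk by simp
    qed
  qed
  have "(if b then x else a_inv (K p) x) \<in> carrier (K p)" "(if b' then y else a_inv (K p) y) \<in> carrier (K p)"
    using xc by auto
  then show "rsub (sg b (yv j)) (sg b' (yv k)) p \<noteq> zero (K p)"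
    using val ne fld_minus_eq0 by simp
qed

definition "phi s u = (fst u, rmul s (sg (snd u) (yv (iota (fst u)))))"
definition "Blk i s = phi s ` (Aset i \<times> (UNIV::bool set))"
definition "Dd u v = rsub (sg (snd u) (yv (iota (fst u)))) (sg (snd v) (yv (iota (fst v))))"

lemma zm_eq: "ZF_minus (2*n+1) K u v = ((fst u - fst v) mod 40, rsub (snd u) (snd v))"
  by (simp add: ZF_minus_def rsub_def PF_def)

lemma iota_ok: "u \<in> Aset i \<times> (UNIV::bool set) \<Longrightarrow> iota (fst u) < 27"
  using iota_bound by auto

lemma yvi_RR: "u \<in> Aset i \<times> (UNIV::bool set) \<Longrightarrow> sg b (yv (iota (fst u))) \<in> RR"
  using iota_ok yv_RR sg_RR by blast

lemma phi_diff: assumes "s \<in> RR" "u \<in> Aset i \<times> (UNIV::bool set)" "v \<in> Aset i' \<times> (UNIV::bool set)"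
  shows "ZF_minus (2*n+1) K (phi s u) (phi s v) = ((fst u - fst v) mod 40, rmul s (Dd u v))"
  unfolding zm_eq phi_def Dd_def using rsub_rmul[OF assms(1) yvi_RR[OF assms(2)] yvi_RR[OF assms(3)]] by simp

lemma Dd_unit: assumes "u \<in> Aset i \<times> (UNIV::bool set)" "v \<in> Aset i \<times> (UNIV::bool set)" "u \<noteq> v"
  shows "isunit (Dd u v)"
proof -
  have "(iota (fst u), snd u) \<noteq> (iota (fst v), snd v)"
  proof
    assume h: "(iota (fst u), snd u) = (iota (fst v), snd v)"
    have "fst u \<in> Aset i" "fst v \<in> Aset i" using assms by auto
    then have "fst u = fst v" using h iota_inj[of i] unfolding inj_on_def by auto
    then show False using h assms(3) by (simp add: prod_eq_iff)
  qed
  then show ?thesis unfolding Dd_def by (rule D_unit[OF iota_ok[OF assms(1)] iota_ok[OF assms(2)]])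
qed

definition "fl u = (fst u, \<not> snd u)"

lemma Dd_flip: assumes "u \<in> Aset i \<times> (UNIV::bool set)" "v \<in> Aset i' \<times> (UNIV::bool set)"
  shows "Dd (fl u) (fl v) = rneg (Dd u v)"
  unfolding Dd_def fl_def using sg_not yv_RR iota_ok assms rsub_rneg
  by (simp add: sg_not[OF yv_RR[OF iota_ok[OF assms(1)]]] sg_not[OF yv_RR[OF iota_ok[OF assms(2)]]]
      rsub_rneg[OF yvi_RR[OF assms(1)] yvi_RR[OF assms(2)]])

lemma rsub_self: assumes "w \<in> RR" shows "rsub w w = rz"
  unfolding rsub_def rz_def
  by (intro restrict_ext) (simp add: field.fld_minus_eq0[OF Fp] RR_mem assms)

lemma rmul_unit_rz: assumes "isunit d" "s \<in> RR" "rmul s d = rz" shows "s = rz"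
  using rmul_solve[OF assms(1,2) rz_RR] assms(3) rmul_rz[OF rinv_RR[OF assms(1)]] by simp

lemma yv_unit: assumes "j < 27" shows "isunit (sg b (yv j))"
  unfolding isunit_def
proof (intro conjI ballI)
  show "sg b (yv j) \<in> RR" by (intro sg_RR yv_RR assms)
  fix p assume p: "p \<in> PF"
  interpret field "K p" using Fp[OF p] .
  have "ee p j \<in> carrier (K p) - {zero (K p)}" using ee_props(1)[OF p] Sp_props(1)[OF p] assms by auto
  then show "sg b (yv j) p \<noteq> zero (K p)"
    using p fld_neg_eq0 by (auto simp: sg_def rneg_def yv_def)
qed

lemma SS_RR: "s \<in> SS \<Longrightarrow> s \<in> RR" and SS_nz: "s \<in> SS \<Longrightarrow> s \<noteq> rz"
  using SS_props(1) by auto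

lemma phi_inj: assumes "s \<in> SS" shows "inj_on (phi s) (Aset i \<times> (UNIV::bool set))"
proof (rule inj_onI)
  fix u v assume u: "u \<in> Aset i \<times> (UNIV::bool set)" and v: "v \<in> Aset i \<times> (UNIV::bool set)"
    and e: "phi s u = phi s v"
  show "u = v"
  proof (rule ccontr)
    assume ne: "u \<noteq> v"
    have "ZF_minus (2*n+1) K (phi s u) (phi s v) = ((fst u - fst v) mod 40, rmul s (Dd u v))"
      using phi_diff[OF SS_RR[OF assms] u v] .
    moreover have "snd (ZF_minus (2*n+1) K (phi s u) (phi s v)) = rz"
      unfolding zm_eq e using rsub_self rmul_RR SS_RR[OF assms] yvi_RR[OF v] by (simp add: phi_def)
    ultimately have "rmul s (Dd u v) = rz" by simp
    then have "s = rz" using rmul_unit_rz[OF Dd_unit[OF u v ne] SS_RR[OF assms]] by simp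
    then show False using SS_nz[OF assms] by simp
  qed
qed

lemma phi_snd: assumes "s \<in> SS" "u \<in> Aset i \<times> (UNIV::bool set)"
  shows "snd (phi s u) \<in> RR" "snd (phi s u) \<noteq> rz" "fst (phi s u) \<in> {0..<40}"
proof -
  have un: "isunit (sg (snd u) (yv (iota (fst u))))" using yv_unit iota_ok[OF assms(2)] by blast
  show "snd (phi s u) \<in> RR" unfolding phi_def using rmul_RR SS_RR[OF assms(1)] yvi_RR[OF assms(2)] by simp
  show "snd (phi s u) \<noteq> rz" unfolding phi_def using rmul_unit_rz[OF un SS_RR[OF assms(1)]] SS_nz[OF assms(1)] by auto
  have "fst u \<in> Aset i" using assms(2) by auto
  then show "fst (phi s u) \<in> {0..<40}" unfolding phi_def using Aset_sub[of i] by auto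
qed

lemma phi_cover: assumes "g \<in> {0..<40}" "t \<in> RR" "t \<noteq> rz"
  shows "\<exists>i<4. \<exists>s\<in>SS. (g,t) \<in> Blk i s"
proof -
  define i where "i = BL ! nat g"
  have gi: "i < 4" "g \<in> Aset i" using Aset_cover assms(1) unfolding i_def by auto
  define y where "y = yv (iota g)"
  have yu: "isunit (sg True y)" "isunit (sg False y)" unfolding y_def using yv_unit iota_bound[OF gi(2)] by auto
  have yR: "y \<in> RR" unfolding y_def using yv_RR iota_bound[OF gi(2)] by auto
  define x where "x = rmul t (rinv y)"
  have xR: "x \<in> RR" unfolding x_def using rmul_RR assms rinv_RR yu by (simp add: sg_def)
  have xt: "rmul x y = t" using rmul_solve[OF yu(1) xR assms(2)] by (simp add: sg_def x_def)
  have xnz: "x \<noteq> rz" using xt rmul_rz[OF yR] assms(3) by auto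
  show ?thesis
  proof (cases "x \<in> SS")
    case True
    have "phi x (g, True) = (g,t)" unfolding phi_def using xt by (simp add: sg_def y_def)
    then have "(g,t) \<in> Blk i x" unfolding Blk_def using gi by (intro image_eqI[of _ _ "(g,True)"]) auto
    then show ?thesis using gi True by blast
  next
    case False
    then have nx: "rneg x \<in> SS" using SS_props(2)[of x] xR xnz by blast
    have "rmul (rneg x) (rneg y) = t"
      using rmul_rneg[OF rneg_RR[OF xR] yR] rmul_rneg_l[OF xR yR] rneg_rneg rmul_RR xR yR xt assms(2) by simp
    then have "phi (rneg x) (g, False) = (g,t)" unfolding phi_def by (simp add: sg_def y_def)
    then have "(g,t) \<in> Blk i (rneg x)" unfolding Blk_def using gi by (intro image_eqI[of _ _ "(g,False)"]) auto
    then show ?thesis using gi nx by blast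
  qed
qed

lemma phi_disj: assumes "s \<in> SS" "s' \<in> SS" "u \<in> Aset i \<times> (UNIV::bool set)" "u' \<in> Aset i' \<times> (UNIV::bool set)"
  "phi s u = phi s' u'"
  shows "i = i' \<and> s = s'"
proof -
  have g: "fst u = fst u'" using assms(5) unfolding phi_def by simp
  have "i = BL ! nat (fst u)" "i' = BL ! nat (fst u')" using assms(3,4) by (auto simp: Aset_def)
  then have ii: "i = i'" using g by simp
  define y where "y = yv (iota (fst u))"
  have yR: "y \<in> RR" unfolding y_def using yv_RR iota_ok[OF assms(3)] by auto
  define d where "d = sg (snd u) y"
  have du: "isunit d" unfolding d_def y_def using yv_unit iota_ok[OF assms(3)] by auto
  have dR: "d \<in> RR" using du by (simp add: isunit_def)
  have e: "rmul s d = rmul s' (sg (snd u') y)" using assms(5) g unfolding phi_def d_def y_def by simp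
  have sR: "s \<in> RR" "s' \<in> RR" using SS_RR assms(1,2) by auto
  show ?thesis
  proof (cases "snd u' = snd u")
    case True
    then have "rmul s d = rmul s' d" using e d_def by simp
    then have "s = s'" using rmul_solve[OF du sR(1) rmul_RR[OF sR(2) dR]] rmul_solve[OF du sR(2) rmul_RR[OF sR(2) dR]]
      by simp
    then show ?thesis using ii by simp
  next
    case False
    then have "sg (snd u') y = rneg d" unfolding d_def using sg_not[OF yR, of "snd u"]
      by (cases "snd u") auto
    then have "rmul s d = rmul (rneg s') d" using e rmul_rneg[OF sR(2) dR] rmul_rneg_l[OF sR(2) dR] by simp
    then have "s = rneg s'"
      using rmul_solve[OF du sR(1) rmul_RR[OF rneg_RR[OF sR(2)] dR]] rmul_solve[OF du rneg_RR[OF sR(2)] rmul_RR[OF rneg_RR[OF sR(2)] dR]]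
      by simp
    then have False using SS_props(2)[of s'] assms(1,2) SS_props(1) by blast
    then show ?thesis ..
  qed
qed

lemma N_one: assumes "isunit d" "t \<in> RR" "t \<noteq> rz"
  shows "card {s\<in>SS. rmul s d = t} + card {s\<in>SS. rmul s (rneg d) = t} = 1"
proof -
  have dR: "d \<in> RR" using assms(1) by (simp add: isunit_def)
  define x where "x = rmul t (rinv d)"
  have xR: "x \<in> RR" unfolding x_def using rmul_RR[OF assms(2) rinv_RR[OF assms(1)]] .
  have e1: "{s\<in>SS. rmul s d = t} = SS \<inter> {x}"
    using rmul_solve[OF assms(1) _ assms(2)] SS_RR unfolding x_def by blast
  have e2: "{s\<in>SS. rmul s (rneg d) = t} = SS \<inter> {rneg x}"
  proof -
    have "rmul s (rneg d) = t \<longleftrightarrow> s = rneg x" if s: "s \<in> RR" for s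
    proof -
      have "rmul s (rneg d) = t \<longleftrightarrow> rneg (rmul s d) = t" using rmul_rneg[OF s dR] by simp
      also have "\<dots> \<longleftrightarrow> rmul s d = rneg t"
        using rneg_rneg rmul_RR[OF s dR] assms(2) by metis
      also have "\<dots> \<longleftrightarrow> s = rmul (rneg t) (rinv d)" using rmul_solve[OF assms(1) s rneg_RR[OF assms(2)]] .
      also have "rmul (rneg t) (rinv d) = rneg x"
        unfolding x_def using rmul_rneg_l[OF assms(2) rinv_RR[OF assms(1)]] .
      finally show ?thesis .
    qed
    then show ?thesis using SS_RR by blast
  qed
  have xnz: "x \<noteq> rz"
  proof
    assume "x = rz"
    then have "rmul rz d = t" using rmul_solve[OF assms(1) rz_RR assms(2)] unfolding x_def by simp
    then show False using rmul_rz[OF dR] assms(3) by simp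
  qed
  have "rneg x \<in> SS \<longleftrightarrow> x \<notin> SS" using SS_props(2)[of x] xR xnz by blast
  then show ?thesis unfolding e1 e2 by (cases "x \<in> SS") auto
qed

definition "Qi i = {(u,v). u \<in> Aset i \<times> (UNIV::bool set) \<and> v \<in> Aset i \<times> (UNIV::bool set) \<and> u \<noteq> v}"
definition "gd q = (fst (fst q) - fst (snd q)) mod (40::int)"

lemma finite_Qi: "finite (Qi i)"
  by (rule finite_subset[of _ "(Aset i \<times> UNIV) \<times> (Aset i \<times> UNIV)"]) (auto simp: Qi_def finite_Aset)

lemma finite_Blk: "finite (Blk i s)" unfolding Blk_def by (simp add: finite_Aset)

lemma blk_cnt: assumes "s \<in> SS"
  shows "card {(x,y). x\<in>Blk i s \<and> y\<in>Blk i s \<and> x\<noteq>y \<and> ZF_minus (2*n+1) K x y = (c,t)}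
       = card {q\<in>Qi i. gd q = c \<and> rmul s (Dd (fst q) (snd q)) = t}"
proof -
  let ?F = "\<lambda>q. (phi s (fst q), phi s (snd q))"
  have inj: "inj_on ?F (Qi i)" using phi_inj[OF assms, of i] unfolding inj_on_def Qi_def by auto
  have "{(x,y). x\<in>Blk i s \<and> y\<in>Blk i s \<and> x\<noteq>y \<and> ZF_minus (2*n+1) K x y = (c,t)}
      = ?F ` {q\<in>Qi i. gd q = c \<and> rmul s (Dd (fst q) (snd q)) = t}"
  proof
    show "{(x,y). x\<in>Blk i s \<and> y\<in>Blk i s \<and> x\<noteq>y \<and> ZF_minus (2*n+1) K x y = (c,t)}
      \<subseteq> ?F ` {q\<in>Qi i. gd q = c \<and> rmul s (Dd (fst q) (snd q)) = t}"
    proof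
      fix z assume z: "z \<in> {(x,y). x\<in>Blk i s \<and> y\<in>Blk i s \<and> x\<noteq>y \<and> ZF_minus (2*n+1) K x y = (c,t)}"
      then obtain u v where uv: "u \<in> Aset i \<times> (UNIV::bool set)" "v \<in> Aset i \<times> (UNIV::bool set)"
        "z = (phi s u, phi s v)" unfolding Blk_def by auto
      have ne: "u \<noteq> v" using z uv by auto
      have "ZF_minus (2*n+1) K (phi s u) (phi s v) = (c,t)" using z uv by auto
      then have "gd (u,v) = c" "rmul s (Dd u v) = t" using phi_diff[OF SS_RR[OF assms] uv(1,2)]
        by (auto simp: gd_def)
      then show "z \<in> ?F ` {q\<in>Qi i. gd q = c \<and> rmul s (Dd (fst q) (snd q)) = t}"
        using uv ne by (intro image_eqI[of _ _ "(u,v)"]) (auto simp: Qi_def)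
    qed
    show "?F ` {q\<in>Qi i. gd q = c \<and> rmul s (Dd (fst q) (snd q)) = t}
      \<subseteq> {(x,y). x\<in>Blk i s \<and> y\<in>Blk i s \<and> x\<noteq>y \<and> ZF_minus (2*n+1) K x y = (c,t)}"
    proof
      fix z assume "z \<in> ?F ` {q\<in>Qi i. gd q = c \<and> rmul s (Dd (fst q) (snd q)) = t}"
      then obtain q where q: "q \<in> Qi i" "gd q = c" "rmul s (Dd (fst q) (snd q)) = t" "z = ?F q" by auto
      define u where "u = fst q"
      define v where "v = snd q"
      have uv: "u \<in> Aset i \<times> (UNIV::bool set)" "v \<in> Aset i \<times> (UNIV::bool set)" "u \<noteq> v"
        "gd (u,v) = c" "rmul s (Dd u v) = t" "z = (phi s u, phi s v)"
        using q unfolding u_def v_def Qi_def by auto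
      have "phi s u \<noteq> phi s v" using phi_inj[OF assms, of i] uv unfolding inj_on_def by blast
      moreover have "ZF_minus (2*n+1) K (phi s u) (phi s v) = (c,t)"
        using phi_diff[OF SS_RR[OF assms] uv(1,2)] uv(4,5) by (simp add: gd_def)
      ultimately show "z \<in> {(x,y). x\<in>Blk i s \<and> y\<in>Blk i s \<and> x\<noteq>y \<and> ZF_minus (2*n+1) K x y = (c,t)}"
        using uv unfolding Blk_def by auto
    qed
  qed
  moreover have "inj_on ?F {q\<in>Qi i. gd q = c \<and> rmul s (Dd (fst q) (snd q)) = t}"
    using inj by (rule inj_on_subset) auto
  ultimately show ?thesis by (simp add: card_image)
qed

lemma sum_card_swap: assumes "finite A" "finite B"
  shows "(\<Sum>b\<in>B. card {a\<in>A. P a b}) = (\<Sum>a\<in>A. card {b\<in>B. P a b})"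
proof -
  have c: "card {x\<in>X. Q x} = (\<Sum>x\<in>X. if Q x then 1 else 0)" if "finite X" for X and Q :: "_ \<Rightarrow> bool"
    using that by (simp add: sum.inter_filter[symmetric])
  have "(\<Sum>b\<in>B. card {a\<in>A. P a b}) = (\<Sum>b\<in>B. \<Sum>a\<in>A. if P a b then 1 else 0)"
    by (intro sum.cong refl c[OF assms(1)])
  also have "\<dots> = (\<Sum>a\<in>A. \<Sum>b\<in>B. if P a b then 1 else 0)" by (rule sum.swap)
  also have "\<dots> = (\<Sum>a\<in>A. card {b\<in>B. P a b})" by (intro sum.cong refl c[OF assms(2), symmetric])
  finally show ?thesis .
qed

definition "flq q = (fl (fst q), fl (snd q))"

lemma flq_Qi: "q \<in> Qi i \<Longrightarrow> flq q \<in> Qi i" by (auto simp: Qi_def flq_def fl_def prod_eq_iff)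
lemma flq_flq: "flq (flq q) = q" by (simp add: flq_def fl_def)
lemma gd_flq: "gd (flq q) = gd q" by (simp add: gd_def flq_def fl_def)

lemma main_nz: assumes "t \<in> RR" "t \<noteq> rz" "0 \<le> c" "c < 40"
  shows "2 * (\<Sum>i\<in>{0..<4::nat}. \<Sum>s\<in>SS. card {q\<in>Qi i. gd q = c \<and> rmul s (Dd (fst q) (snd q)) = t}) = 80"
proof -
  define f where "f q = (if gd q = c then card {s\<in>SS. rmul s (Dd (fst q) (snd q)) = t} else 0)" for q
  have step1: "(\<Sum>s\<in>SS. card {q\<in>Qi i. gd q = c \<and> rmul s (Dd (fst q) (snd q)) = t}) = (\<Sum>q\<in>Qi i. f q)" for i
  proof -
    have "(\<Sum>s\<in>SS. card {q\<in>Qi i. gd q = c \<and> rmul s (Dd (fst q) (snd q)) = t})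
        = (\<Sum>q\<in>Qi i. card {s\<in>SS. gd q = c \<and> rmul s (Dd (fst q) (snd q)) = t})"
      by (rule sum_card_swap[OF finite_Qi finite_SS])
    also have "\<dots> = (\<Sum>q\<in>Qi i. f q)" unfolding f_def by (intro sum.cong) auto
    finally show ?thesis .
  qed
  have step2: "2 * (\<Sum>q\<in>Qi i. f q) = card {q\<in>Qi i. gd q = c}" for i
  proof -
    have r: "(\<Sum>q\<in>Qi i. f q) = (\<Sum>q\<in>Qi i. f (flq q))"
      by (rule sum.reindex_bij_witness[of _ flq flq]) (auto simp: flq_Qi flq_flq)
    have fq: "f q + f (flq q) = (if gd q = c then 1 else 0)" if q: "q \<in> Qi i" for q
    proof -
      have u: "fst q \<in> Aset i \<times> (UNIV::bool set)" "snd q \<in> Aset i \<times> (UNIV::bool set)" "fst q \<noteq> snd q"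
        using q by (auto simp: Qi_def)
      have "Dd (fst (flq q)) (snd (flq q)) = rneg (Dd (fst q) (snd q))"
        unfolding flq_def using Dd_flip[OF u(1,2)] by simp
      then show ?thesis unfolding f_def gd_flq
        using N_one[OF Dd_unit[OF u] assms(1,2)] by simp
    qed
    have "2 * (\<Sum>q\<in>Qi i. f q) = (\<Sum>q\<in>Qi i. f q + f (flq q))"
      using r by (simp add: sum.distrib)
    also have "\<dots> = (\<Sum>q\<in>Qi i. if gd q = c then 1 else 0)" using fq by (intro sum.cong) auto
    also have "\<dots> = card {q\<in>Qi i. gd q = c}" using finite_Qi by (simp add: sum.inter_filter[symmetric])
    finally show ?thesis .
  qed
  have "2 * (\<Sum>i\<in>{0..<4::nat}. \<Sum>s\<in>SS. card {q\<in>Qi i. gd q = c \<and> rmul s (Dd (fst q) (snd q)) = t})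
      = (\<Sum>i\<in>{0..<4::nat}. 2 * (\<Sum>q\<in>Qi i. f q))" using step1 by (simp add: sum_distrib_left)
  also have "\<dots> = (\<Sum>i\<in>{0..<4::nat}. card {q\<in>Qi i. gd q = c})" using step2 by simp
  also have "\<dots> = (\<Sum>i\<in>{0..<4::nat}. card {(u,v). u \<in> Aset i \<times> (UNIV::bool set) \<and> v \<in> Aset i \<times> UNIV \<and> u \<noteq> v \<and> (fst u - fst v) mod 40 = c})"
    by (intro sum.cong refl arg_cong[where f=card]) (auto simp: Qi_def gd_def)
  also have "\<dots> = 80" using pair_count assms(3,4) by simp
  finally show ?thesis .
qed

lemma main_z: assumes "s \<in> SS"
  shows "card {q\<in>Qi i. gd q = c \<and> rmul s (Dd (fst q) (snd q)) = rz} = 0"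
proof -
  have "{q\<in>Qi i. gd q = c \<and> rmul s (Dd (fst q) (snd q)) = rz} = {}"
  proof (rule ccontr)
    assume "{q\<in>Qi i. gd q = c \<and> rmul s (Dd (fst q) (snd q)) = rz} \<noteq> {}"
    then obtain q where q: "q \<in> Qi i" "rmul s (Dd (fst q) (snd q)) = rz" by auto
    have u: "fst q \<in> Aset i \<times> (UNIV::bool set)" "snd q \<in> Aset i \<times> (UNIV::bool set)" "fst q \<noteq> snd q"
      using q by (auto simp: Qi_def)
    have "s = rz" using rmul_unit_rz[OF Dd_unit[OF u] SS_RR[OF assms] q(2)] .
    then show False using SS_nz[OF assms] by simp
  qed
  then show ?thesis by (metis card.empty)
qed

definition "sl = (SOME l. distinct l \<and> set l = SS)"

lemma sl_props: "distinct sl" "set sl = SS" "length sl = n"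
proof -
  have "distinct sl \<and> set sl = SS" unfolding sl_def
    by (rule someI_ex) (use finite_distinct_list[OF finite_SS] in auto)
  then show "distinct sl" "set sl = SS" by auto
  then show "length sl = n" using card_SS distinct_card by metis
qed

definition "Z0 = {0..<40::int} \<times> {rz}"
definition "pl = List.product [0::nat,1,2,3] sl"
definition "Bs = Z0 # map (\<lambda>(i,s). Blk i s) pl"

lemma pl_props: "distinct pl" "set pl = {0..<4} \<times> SS"
proof -
  show "distinct pl" unfolding pl_def by (rule distinct_product) (simp_all add: sl_props)
  have e: "set [0::nat,1,2,3] = {0..<4}" by auto
  show "set pl = {0..<4} \<times> SS" unfolding pl_def set_product sl_props(2) e ..
qed

lemma Z0_cnt: assumes "1 \<le> c" "c < 40"
  shows "card {(x,y). x\<in>Z0 \<and> y\<in>Z0 \<and> x\<noteq>y \<and> ZF_minus (2*n+1) K x y = (c,rz)} = 40"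
proof -
  let ?F = "\<lambda>a::int. ((a,rz),((a - c) mod 40, rz))"
  have "{(x,y). x\<in>Z0 \<and> y\<in>Z0 \<and> x\<noteq>y \<and> ZF_minus (2*n+1) K x y = (c,rz)} = ?F ` {0..<40}"
  proof
    show "{(x,y). x\<in>Z0 \<and> y\<in>Z0 \<and> x\<noteq>y \<and> ZF_minus (2*n+1) K x y = (c,rz)} \<subseteq> ?F ` {0..<40}"
    proof
      fix z assume z: "z \<in> {(x,y). x\<in>Z0 \<and> y\<in>Z0 \<and> x\<noteq>y \<and> ZF_minus (2*n+1) K x y = (c,rz)}"
      then obtain a b where ab: "z = ((a,rz),(b,rz))" "a \<in> {0..<40}" "b \<in> {0..<40}" "(a - b) mod 40 = c"
        unfolding Z0_def zm_eq by auto
      have "(a - c) mod 40 = (a - (a - b) mod 40) mod 40" using ab(4) by simp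
      also have "\<dots> = (a - (a - b)) mod 40" by (rule mod_diff_right_eq)
      also have "\<dots> = b" using ab(3) by simp
      finally show "z \<in> ?F ` {0..<40}" using ab by auto
    qed
    show "?F ` {0..<40} \<subseteq> {(x,y). x\<in>Z0 \<and> y\<in>Z0 \<and> x\<noteq>y \<and> ZF_minus (2*n+1) K x y = (c,rz)}"
    proof
      fix z assume "z \<in> ?F ` {0..<40}"
      then obtain a where a: "a \<in> {0..<40}" "z = ?F a" by auto
      have m: "(a - (a - c) mod 40) mod 40 = c"
      proof -
        have "(a - (a - c) mod 40) mod 40 = (a - (a - c)) mod 40" by (rule mod_diff_right_eq)
        then show ?thesis using assms by simp
      qed
      have "a \<noteq> (a - c) mod 40" using m assms by auto
      then show "z \<in> {(x,y). x\<in>Z0 \<and> y\<in>Z0 \<and> x\<noteq>y \<and> ZF_minus (2*n+1) K x y = (c,rz)}"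
        using a m rsub_rz unfolding Z0_def zm_eq by auto
    qed
  qed
  moreover have "inj_on ?F {0..<40}" by (rule inj_onI) simp
  ultimately show ?thesis by (simp add: card_image)
qed

lemma Z0_cnt0: assumes "t \<noteq> rz"
  shows "card {(x,y). x\<in>Z0 \<and> y\<in>Z0 \<and> x\<noteq>y \<and> ZF_minus (2*n+1) K x y = (c,t)} = 0"
proof -
  have "{(x,y). x\<in>Z0 \<and> y\<in>Z0 \<and> x\<noteq>y \<and> ZF_minus (2*n+1) K x y = (c,t)} = {}"
    using assms rsub_rz unfolding Z0_def zm_eq by auto
  then show ?thesis by (metis card.empty)
qed

lemma card_Blk: assumes "s \<in> SS" shows "card (Blk i s) = 2 * card (Aset i)"
proof -
  have "card (Blk i s) = card (Aset i \<times> (UNIV::bool set))"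
    unfolding Blk_def by (rule card_image[OF phi_inj[OF assms]])
  also have "\<dots> = 2 * card (Aset i)" by (simp add: card_cartesian_product)
  finally show ?thesis .
qed

lemma Blk_sub: assumes "s \<in> SS" shows "Blk i s \<subseteq> {0..<40} \<times> RR"
proof
  fix x assume "x \<in> Blk i s"
  then obtain u where u: "u \<in> Aset i \<times> (UNIV::bool set)" "x = phi s u" unfolding Blk_def by auto
  then show "x \<in> {0..<40} \<times> RR" using phi_snd[OF assms u(1)] by (simp add: mem_Times_iff)
qed

lemma Blk_nz: assumes "s \<in> SS" "x \<in> Blk i s" shows "snd x \<noteq> rz"
  using assms phi_snd unfolding Blk_def by auto

lemma Blk_disj: assumes "s \<in> SS" "s' \<in> SS" "(i,s) \<noteq> (i',s')" shows "Blk i s \<inter> Blk i' s' = {}"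
proof (rule ccontr)
  assume "Blk i s \<inter> Blk i' s' \<noteq> {}"
  then obtain x where x: "x \<in> Blk i s" "x \<in> Blk i' s'" by blast
  obtain u where u: "u \<in> Aset i \<times> (UNIV::bool set)" "x = phi s u" using x(1) unfolding Blk_def by auto
  obtain u' where u': "u' \<in> Aset i' \<times> (UNIV::bool set)" "x = phi s' u'" using x(2) unfolding Blk_def by auto
  have "phi s u = phi s' u'" using u u' by simp
  note * = this
  then show False using phi_disj[OF assms(1,2) u(1) u'(1) *] assms(3) by blast
qed

lemma Aset_ne: "i < 4 \<Longrightarrow> Aset i \<noteq> {}"
proof -
  assume "i < 4"
  then have "i = 0 \<or> i = 1 \<or> i = 2 \<or> i = 3" by auto
  then have "card (Aset i) \<noteq> 0" using card_Aset_vals by auto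
  then show "Aset i \<noteq> {}" by auto
qed

lemma disj_nth:
  assumes "distinct xs" "\<And>a b. a \<in> set xs \<Longrightarrow> b \<in> set xs \<Longrightarrow> a \<noteq> b \<Longrightarrow> F a \<inter> F b = {}"
    "\<And>a. a \<in> set xs \<Longrightarrow> Z \<inter> F a = {}"
  shows "\<forall>i<length (Z # map F xs). \<forall>j<length (Z # map F xs). i \<noteq> j \<longrightarrow> (Z # map F xs) ! i \<inter> (Z # map F xs) ! j = {}"
proof (intro allI impI)
  fix i j assume ij: "i < length (Z # map F xs)" "j < length (Z # map F xs)" "i \<noteq> j"
  show "(Z # map F xs) ! i \<inter> (Z # map F xs) ! j = {}"
  proof (cases i)
    case 0
    then obtain j' where "j = Suc j'" "j' < length xs" using ij by (cases j) auto
    then show ?thesis using 0 assms(3)[of "xs ! j'"] by simp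
  next
    case (Suc i')
    then have i': "i' < length xs" using ij by simp
    show ?thesis
    proof (cases j)
      case 0
      then show ?thesis using Suc i' assms(3)[of "xs ! i'"] by auto
    next
      case (Suc j')
      then have j': "j' < length xs" "i' \<noteq> j'" using ij \<open>i = Suc i'\<close> by auto
      have "xs ! i' \<noteq> xs ! j'" using assms(1) i' j' nth_eq_iff_index_eq by blast
      then show ?thesis using Suc \<open>i = Suc i'\<close> i' j' assms(2) by simp
    qed
  qed
qed

lemma carrier_eq: "ZF_carrier (2*n+1) K = {0..<40} \<times> RR"
  by (simp add: ZF_carrier_def RR_def PF_def)

lemma zero_eq: "ZF_zero (2*n+1) K = (0, rz)"
  by (simp add: ZF_zero_def rz_def PF_def)

lemma mset_part: "mset (map card Bs) =
  replicate_mset n 2 + replicate_mset n 6 + replicate_mset n 18 + replicate_mset n 54 + {#40#}"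
proof -
  have cZ: "card Z0 = 40" unfolding Z0_def by (simp add: card_cartesian_product)
  have m: "map (\<lambda>s. card (Blk i s)) sl = replicate n (2 * card (Aset i))" for i
  proof -
    have "map (\<lambda>s. card (Blk i s)) sl = map (\<lambda>s. 2 * card (Aset i)) sl"
      using card_Blk sl_props(2) by (intro map_cong) auto
    then show ?thesis using sl_props(3) by (simp add: map_replicate_const)
  qed
  have "map card Bs = card Z0 # (map (\<lambda>s. card (Blk 0 s)) sl @ map (\<lambda>s. card (Blk 1 s)) sl @
      map (\<lambda>s. card (Blk 2 s)) sl @ map (\<lambda>s. card (Blk 3 s)) sl)" unfolding Bs_def pl_def by (simp add: comp_def)
  moreover have "map (\<lambda>s. card (Blk 0 s)) sl = replicate n 2" using m[of 0] card_Aset_vals(1) by simp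
  moreover have "map (\<lambda>s. card (Blk 1 s)) sl = replicate n 6" using m[of 1] card_Aset_vals(2) by simp
  moreover have "map (\<lambda>s. card (Blk 2 s)) sl = replicate n 18" using m[of 2] card_Aset_vals(3) by simp
  moreover have "map (\<lambda>s. card (Blk 3 s)) sl = replicate n 54" using m[of 3] card_Aset_vals(4) by simp
  ultimately have "map card Bs = 40 # (replicate n 2 @ replicate n 6 @ replicate n 18 @ replicate n 54)"
    using cZ by simp
  then show ?thesis by (simp only: mset.simps mset_append mset_replicate) (simp add: ac_simps)
qed

lemma blk_cnt2: assumes "s \<in> SS"
  shows "count (diff_multiset (ZF_minus (2*n+1) K) (Blk i s)) (c,t)
       = card {q\<in>Qi i. gd q = c \<and> rmul s (Dd (fst q) (snd q)) = t}"
  unfolding count_diff_multiset[OF finite_Blk] by (rule blk_cnt[OF assms])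

lemma finite_Z0: "finite Z0" unfolding Z0_def by simp

lemma count_main: assumes "0 \<le> c" "c < 40" "t \<in> RR" "(c,t) \<noteq> (0,rz)"
  shows "count (sum_list (map (diff_multiset (ZF_minus (2*n+1) K)) Bs)) (c,t) = 40"
proof -
  let ?zm = "ZF_minus (2*n+1) K"
  let ?cnt = "\<lambda>B. count (diff_multiset ?zm B) (c,t)"
  have "count (sum_list (map (diff_multiset ?zm) Bs)) (c,t) = sum_list (map ?cnt Bs)"
    by (simp add: count_sum_list comp_def)
  also have "\<dots> = ?cnt Z0 + sum_list (map (\<lambda>x. ?cnt (case_prod Blk x)) pl)"
    by (simp add: Bs_def comp_def)
  also have "sum_list (map (\<lambda>x. ?cnt (case_prod Blk x)) pl) = (\<Sum>x\<in>set pl. ?cnt (case_prod Blk x))"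
    by (rule sum_list_distinct_conv_sum_set[OF pl_props(1)])
  also have "\<dots> = (\<Sum>(i,s)\<in>{0..<4} \<times> SS. ?cnt (Blk i s))" unfolding pl_props(2)
    by (simp add: case_prod_beta')
  also have "\<dots> = (\<Sum>i\<in>{0..<4::nat}. \<Sum>s\<in>SS. ?cnt (Blk i s))" by (rule sum.cartesian_product[symmetric])
  also have "\<dots> = (\<Sum>i\<in>{0..<4::nat}. \<Sum>s\<in>SS. card {q\<in>Qi i. gd q = c \<and> rmul s (Dd (fst q) (snd q)) = t})"
    by (rule sum.cong[OF refl], rule sum.cong[OF refl], rule blk_cnt2) assumption
  finally have e: "count (sum_list (map (diff_multiset ?zm) Bs)) (c,t) =
      card {(x,y). x\<in>Z0 \<and> y\<in>Z0 \<and> x\<noteq>y \<and> ?zm x y = (c,t)} +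
      (\<Sum>i\<in>{0..<4::nat}. \<Sum>s\<in>SS. card {q\<in>Qi i. gd q = c \<and> rmul s (Dd (fst q) (snd q)) = t})"
    by (simp add: count_diff_multiset[OF finite_Z0])
  show ?thesis
  proof (cases "t = rz")
    case True
    then have "1 \<le> c" using assms by auto
    then show ?thesis unfolding e using True Z0_cnt[of c] assms main_z by simp
  next
    case False
    show ?thesis unfolding e using Z0_cnt0[OF False] main_nz[OF assms(3) False assms(1,2)] by simp
  qed
qed

lemma pdf_main: "is_PDF (ZF_carrier (2*n+1) K) (ZF_minus (2*n+1) K) (ZF_zero (2*n+1) K)
           (80*n+40)
           (replicate_mset n 2 + replicate_mset n 6 + replicate_mset n 18 + replicate_mset n 54 + {#40#})
           40 Bs"
  unfolding is_PDF_def carrier_eq zero_eq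
proof (intro conjI)
  show "card ({0..<40::int} \<times> RR) = 80*n+40" using card_RR by (simp add: card_cartesian_product)
  have blks: "B \<in> set Bs \<longleftrightarrow> B = Z0 \<or> (\<exists>i s. i < 4 \<and> s \<in> SS \<and> B = Blk i s)" for B
    unfolding Bs_def using pl_props(2) by force
  show "\<forall>B\<in>set Bs. B \<noteq> {} \<and> B \<subseteq> {0..<40::int} \<times> RR"
  proof
    fix B assume "B \<in> set Bs"
    then consider "B = Z0" | i s where "i < 4" "s \<in> SS" "B = Blk i s" using blks by blast
    then show "B \<noteq> {} \<and> B \<subseteq> {0..<40::int} \<times> RR"
    proof cases
      case 1
      then show ?thesis using rz_RR unfolding Z0_def by auto
    next
      case 2
      then show ?thesis using Blk_sub[OF 2(2)] Aset_ne[OF 2(1)] unfolding Blk_def by auto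
    qed
  qed
  show "\<forall>i<length Bs. \<forall>j<length Bs. i \<noteq> j \<longrightarrow> Bs ! i \<inter> Bs ! j = {}"
    unfolding Bs_def
  proof (rule disj_nth[OF pl_props(1)])
    fix a b assume "a \<in> set pl" "b \<in> set pl" "a \<noteq> b"
    moreover obtain i s where a: "a = (i,s)" by (cases a)
    moreover obtain i' s' where b: "b = (i',s')" by (cases b)
    ultimately have "s \<in> SS" "s' \<in> SS" "(i,s) \<noteq> (i',s')" using pl_props(2) by auto
    then show "(case a of (i, s) \<Rightarrow> Blk i s) \<inter> (case b of (i, s) \<Rightarrow> Blk i s) = {}"
      using Blk_disj a b by simp
  next
    fix a assume a: "a \<in> set pl"
    obtain i s where ia: "a = (i,s)" by (cases a)
    then have sS: "s \<in> SS" using a pl_props(2) by auto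
    have "Z0 \<inter> Blk i s = {}"
    proof (rule ccontr)
      assume "Z0 \<inter> Blk i s \<noteq> {}"
      then obtain x where x: "x \<in> Z0" "x \<in> Blk i s" by blast
      have "snd x = rz" using x(1) unfolding Z0_def by auto
      then show False using Blk_nz[OF sS x(2)] by simp
    qed
    then show "Z0 \<inter> (case a of (i, s) \<Rightarrow> Blk i s) = {}" using ia by simp
  qed
  show "\<Union> (set Bs) = {0..<40::int} \<times> RR"
  proof
    show "\<Union> (set Bs) \<subseteq> {0..<40::int} \<times> RR"
    proof
      fix x assume "x \<in> \<Union> (set Bs)"
      then obtain B where B: "B \<in> set Bs" "x \<in> B" by blast
      then consider "B = Z0" | i s where "i < 4" "s \<in> SS" "B = Blk i s" using blks by blast
      then show "x \<in> {0..<40::int} \<times> RR"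
      proof cases
        case 1 then show ?thesis using B rz_RR unfolding Z0_def by auto
      next
        case 2 then show ?thesis using B Blk_sub[OF 2(2)] by auto
      qed
    qed
    show "{0..<40::int} \<times> RR \<subseteq> \<Union> (set Bs)"
    proof
      fix x assume x: "x \<in> {0..<40::int} \<times> RR"
      obtain g t where gt: "x = (g,t)" by (cases x)
      show "x \<in> \<Union> (set Bs)"
      proof (cases "t = rz")
        case True
        then have "x \<in> Z0" using x gt unfolding Z0_def by auto
        moreover have "Z0 \<in> set Bs" using blks by blast
        ultimately show ?thesis by blast
      next
        case False
        have "g \<in> {0..<40}" "t \<in> RR" using x gt by auto
        then obtain i s where "i < 4" "s \<in> SS" "(g,t) \<in> Blk i s" using phi_cover False by blast
        moreover have "Blk i s \<in> set Bs" using blks \<open>i < 4\<close> \<open>s \<in> SS\<close> by blast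
        ultimately show ?thesis using gt by blast
      qed
    qed
  qed
  show "mset (map card Bs) =
    replicate_mset n 2 + replicate_mset n 6 + replicate_mset n 18 + replicate_mset n 54 + {#40#}"
    by (rule mset_part)
  show "\<forall>g\<in>{0..<40::int} \<times> RR - {(0, rz)}. count (sum_list (map (diff_multiset (ZF_minus (2*n+1) K)) Bs)) g = 40"
  proof
    fix g assume g: "g \<in> {0..<40::int} \<times> RR - {(0, rz)}"
    obtain c t where ct: "g = (c,t)" by (cases g)
    show "count (sum_list (map (diff_multiset (ZF_minus (2*n+1) K)) Bs)) g = 40"
      using count_main g ct by auto
  qed
qed

end

theorem corollary7p4:
  fixes n :: nat and K :: "nat \<Rightarrow> 'a ring"
  assumes "n > 0"
    and "\<forall>p \<in> prime_factors (2*n+1). p ^ multiplicity p (2*n+1) > 54"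
    and "\<forall>p \<in> prime_factors (2*n+1). field (K p) \<and> finite (carrier (K p)) \<and>
           card (carrier (K p)) = p ^ multiplicity p (2*n+1)"
  shows "\<exists>Bs. is_PDF (ZF_carrier (2*n+1) K) (ZF_minus (2*n+1) K) (ZF_zero (2*n+1) K)
           (80*n+40)
           (replicate_mset n 2 + replicate_mset n 6 + replicate_mset n 18 + replicate_mset n 54 + {#40#})
           40 Bs"
proof -
  interpret pctx n K using assms by (unfold_locales) auto
  show ?thesis using pdf_main by blast
qed



end
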